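(* Let $A$ and $B$ be self-adjoint operators in a von Neumann algebra $\mathcal{M}$, and let $\{E_j\}_{j\in\Lambda}$ be a family of projections in $W^*(A)$ such that: (1) $\sum_{j\in\Lambda}E_j=I$ (so the $E_j$ are mutually orthogonal); (2) $C_{E_jBE_k}=C_{E_j}C_{E_k}$ for all $j\neq k$ in $\Lambda$; (3) for each $j\in\Lambda$, the operator $E_j(A+iB)E_j$ is irreducible in the von Neumann algebra $E_j\mathcal{M}E_j$. Then $A+iB$ is irreducible in $\mathcal{M}$.
   Context: For an operator $T$ in a von Neumann algebra $\mathcal{M}$, the central support $C_T$ is the smallest central projection $Z$ of $\mathcal{M}$ with $ZT=T$. For a von Neumann algebra $\mathcal{N}$ with center $\mathcal{Z}(\mathcal{N})$, an operator $T\in\mathcal{N}$ is called irreducible (in $\mathcal{N}$) if $W^*(T)'\cap\mathcal{N}=\mathcal{Z}(\mathcal{N})$, where $W^*(T)$ is the von Neumann algebra generated by $T$. For a projection $E\in\mathcal{M}$, $E\mathcal{M}E$ is regarded as a von Neumann algebra with unit $E$. *)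

theory Defs
  imports "HOL-Analysis.Analysis"
begin

text \<open>A complex Hilbert space: a real Banach space carrying a complex scalar
multiplication compatible with the real one, and a complex inner product
(linear in the second argument) inducing the norm.\<close>

class chilbert = banach +
  fixes cscale :: "complex \<Rightarrow> 'a \<Rightarrow> 'a"
    and cinner :: "'a \<Rightarrow> 'a \<Rightarrow> complex"
  assumes cscale_add_right: "cscale a (x + y) = cscale a x + cscale a y"
    and cscale_add_left: "cscale (a + b) x = cscale a x + cscale b x"
    and cscale_cscale: "cscale a (cscale b x) = cscale (a * b) x"
    and cscale_one: "cscale 1 x = x"
    and scaleR_cscale: "scaleR r x = cscale (complex_of_real r) x"
    and cinner_add_right: "cinner x (y + z) = cinner x y + cinner x z"
    and cinner_cscale_right: "cinner x (cscale a y) = a * cinner x y"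
    and cinner_commute: "cinner y x = cnj (cinner x y)"
    and cinner_self: "cinner x x = complex_of_real ((norm x)\<^sup>2)"

definition bounded_op :: "('a::chilbert \<Rightarrow> 'a) \<Rightarrow> bool" where
  "bounded_op T \<longleftrightarrow> (\<forall>x y. T (x + y) = T x + T y) \<and> (\<forall>c x. T (cscale c x) = cscale c (T x))
      \<and> (\<exists>K. \<forall>x. norm (T x) \<le> K * norm x)"

definition adj :: "('a::chilbert \<Rightarrow> 'a) \<Rightarrow> ('a \<Rightarrow> 'a)" where
  "adj T = (THE S. \<forall>x y. cinner (T x) y = cinner x (S y))"

definition self_adjoint :: "('a::chilbert \<Rightarrow> 'a) \<Rightarrow> bool" where
  "self_adjoint T \<longleftrightarrow> bounded_op T \<and> adj T = T"

definition is_projection :: "('a::chilbert \<Rightarrow> 'a) \<Rightarrow> bool" where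
  "is_projection P \<longleftrightarrow> bounded_op P \<and> P \<circ> P = P \<and> adj P = P"

definition commutant :: "('a::chilbert \<Rightarrow> 'a) set \<Rightarrow> ('a \<Rightarrow> 'a) set" where
  "commutant S = {T. bounded_op T \<and> (\<forall>R\<in>S. T \<circ> R = R \<circ> T)}"

definition von_neumann_algebra :: "('a::chilbert \<Rightarrow> 'a) set \<Rightarrow> bool" where
  "von_neumann_algebra M \<longleftrightarrow> (\<forall>T\<in>M. bounded_op T) \<and> (\<forall>T\<in>M. adj T \<in> M)
      \<and> commutant (commutant M) = M"

definition Wstar :: "('a::chilbert \<Rightarrow> 'a) \<Rightarrow> ('a \<Rightarrow> 'a) set" where
  "Wstar T = \<Inter> {N. von_neumann_algebra N \<and> T \<in> N}"

definition center :: "('a::chilbert \<Rightarrow> 'a) set \<Rightarrow> ('a \<Rightarrow> 'a) set" where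
  "center N = {S\<in>N. \<forall>R\<in>N. S \<circ> R = R \<circ> S}"

definition central_projection :: "('a::chilbert \<Rightarrow> 'a) set \<Rightarrow> ('a \<Rightarrow> 'a) \<Rightarrow> bool" where
  "central_projection M Z \<longleftrightarrow> is_projection Z \<and> Z \<in> center M"

text \<open>Central support C_T: the smallest central projection Z of M with Z T = T
(order of projections: Z \<le> Z' iff Z Z' = Z).\<close>
definition central_support :: "('a::chilbert \<Rightarrow> 'a) set \<Rightarrow> ('a \<Rightarrow> 'a) \<Rightarrow> ('a \<Rightarrow> 'a)" where
  "central_support M T = (THE Z. central_projection M Z \<and> Z \<circ> T = T \<and>
      (\<forall>Z'. central_projection M Z' \<and> Z' \<circ> T = T \<longrightarrow> Z \<circ> Z' = Z))"

definition corner :: "('a::chilbert \<Rightarrow> 'a) \<Rightarrow> ('a \<Rightarrow> 'a) set \<Rightarrow> ('a \<Rightarrow> 'a) set" where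
  "corner E M = {E \<circ> X \<circ> E | X. X \<in> M}"

definition irreducible_in :: "('a::chilbert \<Rightarrow> 'a) set \<Rightarrow> ('a \<Rightarrow> 'a) \<Rightarrow> bool" where
  "irreducible_in N T \<longleftrightarrow> commutant (Wstar T) \<inter> N = center N"

end

theory Submission
  imports Defs
begin


interpretation cs: vector_space "cscale :: complex \<Rightarrow> 'a::chilbert \<Rightarrow> 'a"
  by unfold_locales (auto simp: cscale_add_right cscale_add_left cscale_cscale cscale_one)

lemma cinner_add_left: "cinner (x + y) z = cinner x z + cinner y z"
  by (metis cinner_add_right cinner_commute complex_cnj_add)

lemma cinner_cscale_left: "cinner (cscale a x) y = cnj a * cinner x y"
  by (metis cinner_cscale_right cinner_commute complex_cnj_mult)

lemma cinner_zero_right[simp]: "cinner x 0 = 0"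
  by (metis add.right_neutral add_cancel_left_right cinner_add_right)

lemma cinner_zero_left[simp]: "cinner 0 x = 0"
  by (metis cinner_commute cinner_zero_right complex_cnj_zero)

lemma cinner_minus_right: "cinner x (- y) = - cinner x y"
  by (metis add.inverse_unique cinner_add_right cinner_zero_right right_minus)

lemma cinner_minus_left: "cinner (- x) y = - cinner x y"
  by (metis cinner_commute cinner_minus_right complex_cnj_minus)

lemma cinner_diff_right: "cinner x (y - z) = cinner x y - cinner x z"
  by (simp only: diff_conv_add_uminus cinner_add_right cinner_minus_right)

lemma cinner_diff_left: "cinner (x - y) z = cinner x z - cinner y z"
  by (simp only: diff_conv_add_uminus cinner_add_left cinner_minus_left)

lemma norm_sq_cinner: "(norm x)^2 = Re (cinner x x)"
  by (simp add: cinner_self)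

lemma cinner_self_eq_0[simp]: "cinner x x = 0 \<longleftrightarrow> x = 0"
  by (simp add: cinner_self)

lemma Re_cinner_real: "cinner x x = complex_of_real (Re (cinner x x))"
  by (simp add: cinner_self)

lemma cnj_mult_self: "cnj a * a = complex_of_real ((cmod a)^2)"
  by (metis complex_norm_square mult.commute)

lemma norm_cscale: "norm (cscale a x) = cmod a * norm x"
proof -
  have e1: "cinner (cscale a x) (cscale a x) = (cnj a * a) * cinner x x"
    by (metis cinner_cscale_left cinner_cscale_right mult.assoc mult.left_commute)
  have "cinner (cscale a x) (cscale a x) = complex_of_real ((cmod a)^2 * (norm x)^2)"
    unfolding e1 cnj_mult_self cinner_self[of x] of_real_mult ..
  then have "(norm (cscale a x))^2 = (cmod a * norm x)^2"
    unfolding norm_sq_cinner[of "cscale a x"] by (simp add: power_mult_distrib)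
  then show ?thesis by (simp add: power2_eq_iff_nonneg)
qed

lemma norm_add_sq: fixes x y :: "'a::chilbert" shows "(norm (x + y))^2 = (norm x)^2 + (norm y)^2 + 2 * Re (cinner x y)"
proof -
  have "(norm (x + y))^2 = Re (cinner x x + cinner x y + (cinner y x + cinner y y))"
    by (simp add: norm_sq_cinner cinner_add_left cinner_add_right)
  also have "\<dots> = (norm x)^2 + (norm y)^2 + 2 * Re (cinner x y)"
    by (subst cinner_commute[of y x]) (simp add: norm_sq_cinner)
  finally show ?thesis .
qed

lemma Re_cinner_le: "Re (cinner x y) \<le> norm x * norm y"
proof -
  have "(norm (x + y))^2 \<le> (norm x + norm y)^2"
    by (simp add: norm_triangle_ineq power_mono)
  then show ?thesis unfolding norm_add_sq by (simp add: power2_sum)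
qed

lemma cinner_CS: "cmod (cinner x y) \<le> norm x * norm y"
proof (cases "cinner x y = 0")
  case True then show ?thesis by simp
next
  case False
  define c where "c = cinner x y"
  define a where "a = c / complex_of_real (cmod c)"
  have cm: "cmod a = 1" using False by (simp add: a_def c_def norm_divide)
  have "cinner (cscale a x) y = cnj a * c" by (simp add: cinner_cscale_left c_def)
  also have "cnj a * c = complex_of_real (cmod c)"
  proof -
    have "cnj a * c = (cnj c * c) / complex_of_real (cmod c)" by (simp add: a_def)
    also have "\<dots> = complex_of_real ((cmod c)^2 / cmod c)" unfolding cnj_mult_self by simp
    also have "\<dots> = complex_of_real (cmod c)" by (simp add: power2_eq_square)
    finally show ?thesis .
  qed
  finally have "cmod c = Re (cinner (cscale a x) y)" by simp
  also have "\<dots> \<le> norm (cscale a x) * norm y" by (rule Re_cinner_le)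
  finally show ?thesis by (simp add: norm_cscale cm c_def)
qed

lemma parallelogram: fixes x y :: "'a::chilbert" shows "(norm (x + y))^2 + (norm (x - y))^2 = 2 * (norm x)^2 + 2 * (norm y)^2"
proof -
  have "(norm (x - y))^2 = (norm x)^2 + (norm y)^2 - 2 * Re (cinner x y)"
    using norm_add_sq[of x "-y"] by (simp add: cinner_minus_right)
  then show ?thesis using norm_add_sq[of x y] by simp
qed

lemma scaleR_cs: "r *\<^sub>R x = cscale (complex_of_real r) x"
  by (rule scaleR_cscale)



definition csub :: "'a::chilbert set \<Rightarrow> bool" where
  "csub V \<longleftrightarrow> 0 \<in> V \<and> (\<forall>x\<in>V. \<forall>y\<in>V. x + y \<in> V) \<and> (\<forall>c. \<forall>x\<in>V. cscale c x \<in> V)"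

lemma csub_0: "csub V \<Longrightarrow> 0 \<in> V" by (simp add: csub_def)
lemma csub_add: "csub V \<Longrightarrow> x \<in> V \<Longrightarrow> y \<in> V \<Longrightarrow> x + y \<in> V" by (simp add: csub_def)
lemma csub_scale: "csub V \<Longrightarrow> x \<in> V \<Longrightarrow> cscale c x \<in> V" by (simp add: csub_def)
lemma cscale_minus_one: "cscale (-1) x = - x"
  by (metis cs.scale_minus_left cscale_one)
lemma csub_minus: "csub V \<Longrightarrow> x \<in> V \<Longrightarrow> - x \<in> V"
  by (metis csub_scale cscale_minus_one)
lemma csub_diff: "csub V \<Longrightarrow> x \<in> V \<Longrightarrow> y \<in> V \<Longrightarrow> x - y \<in> V"
  by (metis csub_add csub_minus diff_conv_add_uminus)
lemma csub_scaleR: "csub V \<Longrightarrow> x \<in> V \<Longrightarrow> r *\<^sub>R x \<in> V"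
  by (simp add: csub_scale scaleR_cscale)

lemma norm_diff_scale_sq:
  fixes u v :: "'a::chilbert"
  shows "(norm (u - cscale (complex_of_real t) v))^2 = (norm u)^2 + t^2 * (norm v)^2 - 2 * t * Re (cinner u v)"
proof -
  have "(norm (u + - cscale (complex_of_real t) v))^2
     = (norm u)^2 + (norm (cscale (complex_of_real t) v))^2 + 2 * Re (cinner u (- cscale (complex_of_real t) v))"
    by (subst norm_add_sq) simp
  also have "(norm (cscale (complex_of_real t) v))^2 = t^2 * (norm v)^2"
    by (simp add: norm_cscale power_mult_distrib)
  also have "Re (cinner u (- cscale (complex_of_real t) v)) = - t * Re (cinner u v)"
    by (simp add: cinner_minus_right cinner_cscale_right)
  finally show ?thesis by simp
qed

lemma proj_exists:
  fixes K :: "'a::chilbert set"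
  assumes K: "csub K" "closed K"
  shows "\<exists>p\<in>K. \<forall>v\<in>K. cinner (x - p) v = 0"
proof -
  define D where "D = (\<lambda>v. norm (x - v)) ` K"
  define d where "d = Inf D"
  have Dne: "D \<noteq> {}" using csub_0[OF K(1)] by (auto simp: D_def)
  have Dbdd: "bdd_below D" unfolding D_def bdd_below_def by (rule exI[of _ 0]) auto
  have d_le: "\<And>v. v \<in> K \<Longrightarrow> d \<le> norm (x - v)"
    unfolding d_def D_def by (rule cInf_lower) (use Dbdd D_def in auto)
  have d_nn: "0 \<le> d" unfolding d_def by (rule cInf_greatest[OF Dne]) (auto simp: D_def)
  have ex: "\<exists>v\<in>K. (norm (x - v))^2 < d^2 + inverse (real (Suc n))" for n
  proof -
    have pos: "0 < inverse (real (Suc n))" by simp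
    have "d < sqrt (d^2 + inverse (real (Suc n)))"
      using d_nn pos by (intro real_less_rsqrt) simp
    then obtain z where z: "z \<in> D" "z < sqrt (d^2 + inverse (real (Suc n)))"
      using cInf_lessD[OF Dne] unfolding d_def by blast
    then obtain v where v: "v \<in> K" "z = norm (x - v)" by (auto simp: D_def)
    have "(norm (x - v))^2 < (sqrt (d^2 + inverse (real (Suc n))))^2"
      using z v by (intro power_strict_mono) auto
    also have "\<dots> = d^2 + inverse (real (Suc n))" using pos d_nn by simp
    finally show ?thesis using v by blast
  qed
  then obtain vs where vs: "\<And>n. vs n \<in> K" "\<And>n. (norm (x - vs n))^2 < d^2 + inverse (real (Suc n))"
    by metis
  have mid: "(norm (vs m - vs n))^2 \<le> 2 * inverse (real (Suc m)) + 2 * inverse (real (Suc n))" for m n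
  proof -
    define a where "a = x - vs m"
    define b where "b = x - vs n"
    have par: "(norm (a + b))^2 + (norm (a - b))^2 = 2*(norm a)^2 + 2*(norm b)^2"
      by (rule parallelogram)
    have ab: "a - b = vs n - vs m" by (simp add: a_def b_def)
    define c where "c = (1/2::real) *\<^sub>R (vs m + vs n)"
    have cK: "c \<in> K" unfolding c_def using vs(1) K(1) by (intro csub_scaleR csub_add) auto
    have "a + b = (2::real) *\<^sub>R (x - c)" by (simp add: a_def b_def c_def algebra_simps scaleR_2)
    then have "norm (a + b) = 2 * norm (x - c)" by simp
    then have "(norm (a + b))^2 = 4 * (norm (x - c))^2" by (simp add: power_mult_distrib)
    moreover have "d^2 \<le> (norm (x - c))^2" using d_le[OF cK] d_nn by (intro power_mono) auto
    moreover have "(norm (vs m - vs n))^2 = (norm (a - b))^2" by (simp add: ab norm_minus_commute)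
    moreover have "(norm a)^2 < d^2 + inverse (real (Suc m))" using vs(2)[of m] by (simp add: a_def)
    moreover have "(norm b)^2 < d^2 + inverse (real (Suc n))" using vs(2)[of n] by (simp add: b_def)
    ultimately show ?thesis using par by linarith
  qed
  have "Cauchy vs"
    unfolding Cauchy_def
  proof (intro allI impI)
    fix e :: real assume e: "0 < e"
    obtain N where N: "4 / e^2 < real N" using reals_Archimedean2 by blast
    have e2: "0 < e^2" using e by simp
    have N4: "4 < real N * e^2" using N e2 by (simp add: field_simps)
    have "e^2 * real (Suc N) = real N * e^2 + e^2" by (simp add: algebra_simps)
    then have "4 < e^2 * real (Suc N)" using N4 e2 by linarith
    then have N': "4 * inverse (real (Suc N)) < e^2" by (simp add: field_simps)
    show "\<exists>M. \<forall>m\<ge>M. \<forall>n\<ge>M. dist (vs m) (vs n) < e"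
    proof (intro exI allI impI)
      fix m n assume mn: "N \<le> m" "N \<le> n"
      have "inverse (real (Suc m)) \<le> inverse (real (Suc N))" using mn by (simp add: field_simps)
      moreover have "inverse (real (Suc n)) \<le> inverse (real (Suc N))" using mn by (simp add: field_simps)
      ultimately have "(norm (vs m - vs n))^2 < e^2" using mid[of m n] N' by linarith
      then have "norm (vs m - vs n) < e" using e by (simp add: power_less_imp_less_base)
      then show "dist (vs m) (vs n) < e" by (simp add: dist_norm)
    qed
  qed
  then obtain p where p: "vs \<longlonglongrightarrow> p" by (metis Cauchy_convergent_iff convergent_def)
  have pK: "p \<in> K" using closed_sequentially[OF K(2) vs(1) p] .
  have "(norm (x - p))^2 \<le> d^2 + 0"
  proof (rule LIMSEQ_le)
    show "(\<lambda>n. (norm (x - vs n))^2) \<longlonglongrightarrow> (norm (x - p))^2"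
      by (intro tendsto_intros p)
    show "(\<lambda>n. d^2 + inverse (real (Suc n))) \<longlonglongrightarrow> d^2 + 0"
      by (intro tendsto_intros LIMSEQ_inverse_real_of_nat)
    show "\<exists>N. \<forall>n\<ge>N. (norm (x - vs n))^2 \<le> d^2 + inverse (real (Suc n))"
      using vs(2) less_imp_le by blast
  qed
  then have pmin: "(norm (x - p))^2 \<le> (norm (x - v))^2" if "v \<in> K" for v
    using d_le[OF that] d_nn power_mono[of d "norm (x - v)" 2] by simp
  have re0: "Re (cinner (x - p) v) = 0" if vK: "v \<in> K" for v
  proof -
    define r where "r = Re (cinner (x - p) v)"
    have ineq: "2 * t * r \<le> t^2 * (norm v)^2" for t
    proof -
      have "p + cscale (complex_of_real t) v \<in> K" using K(1) pK vK by (intro csub_add csub_scale)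
      from pmin[OF this] have "(norm (x - p))^2 \<le> (norm ((x - p) - cscale (complex_of_real t) v))^2"
        by (simp add: algebra_simps)
      then show ?thesis unfolding norm_diff_scale_sq r_def by simp
    qed
    show ?thesis
    proof (cases "v = 0")
      case True then show ?thesis by simp
    next
      case False
      define n where "n = (norm v)^2"
      have nv: "0 < n" using False by (simp add: n_def)
      have h: "2 * (r / n) * r \<le> (r / n)^2 * n" unfolding n_def by (rule ineq)
      have e1: "2 * (r / n) * r = 2 * (r^2 / n)" by (simp add: power2_eq_square)
      have e2: "(r / n)^2 * n = r^2 / n" using nv by (simp add: power2_eq_square)
      from h e1 e2 have "r^2 / n \<le> 0" by linarith
      then have "r^2 \<le> 0" using nv by (simp add: divide_le_0_iff)
      then show ?thesis unfolding r_def by simp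
    qed
  qed
  have "cinner (x - p) v = 0" if vK: "v \<in> K" for v
  proof (rule complex_eqI)
    show "Re (cinner (x - p) v) = Re 0" using re0[OF vK] by simp
    have "cscale \<i> v \<in> K" using K(1) vK by (rule csub_scale)
    from re0[OF this] show "Im (cinner (x - p) v) = Im 0"
      by (simp add: cinner_cscale_right)
  qed
  then show ?thesis using pK by blast
qed



section \<open>Bounded operators\<close>

lemma bopI: "(\<And>x y. T (x + y) = T x + T y) \<Longrightarrow> (\<And>c x. T (cscale c x) = cscale c (T x))
   \<Longrightarrow> (\<And>x. norm (T x) \<le> K * norm x) \<Longrightarrow> bounded_op T"
  unfolding bounded_op_def by blast

lemma bop_add: "bounded_op T \<Longrightarrow> T (x + y) = T x + T y" by (simp add: bounded_op_def)
lemma bop_cscale: "bounded_op T \<Longrightarrow> T (cscale c x) = cscale c (T x)" by (simp add: bounded_op_def)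

lemma bop_bound: "bounded_op T \<Longrightarrow> \<exists>K\<ge>0. \<forall>x. norm (T x) \<le> K * norm x"
proof -
  assume "bounded_op T"
  then obtain K where K: "\<forall>x. norm (T x) \<le> K * norm x" by (auto simp: bounded_op_def)
  have "\<forall>x. norm (T x) \<le> max K 0 * norm x"
    using K by (metis max.cobounded1 mult_right_mono norm_ge_zero order_trans)
  then show ?thesis by (intro exI[of _ "max K 0"]) auto
qed

lemma bop_bl: "bounded_op T \<Longrightarrow> bounded_linear T"
proof -
  assume T: "bounded_op T"
  then obtain K where K: "\<forall>x. norm (T x) \<le> K * norm x" by (auto simp: bounded_op_def)
  show ?thesis
  proof (rule bounded_linear_intro[of _ K])
    show "T (x + y) = T x + T y" for x y using T by (rule bop_add)
    show "T (r *\<^sub>R x) = r *\<^sub>R T x" for r x using T by (simp add: scaleR_cscale bop_cscale)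
    show "norm (T x) \<le> norm x * K" for x using K by (simp add: mult.commute)
  qed
qed

lemma bop_zero: "bounded_op T \<Longrightarrow> T 0 = 0"
  by (metis add.right_neutral add_left_cancel bop_add)
lemma bop_minus: "bounded_op T \<Longrightarrow> T (- x) = - T x"
  by (metis bop_cscale cscale_minus_one)
lemma bop_diff: "bounded_op T \<Longrightarrow> T (x - y) = T x - T y"
  by (metis bop_add bop_minus diff_conv_add_uminus)
lemma bop_cont: "bounded_op T \<Longrightarrow> continuous_on S T"
  by (simp add: bop_bl linear_continuous_on)

lemma bop_comp: "bounded_op T \<Longrightarrow> bounded_op U \<Longrightarrow> bounded_op (T \<circ> U)"
proof -
  assume T: "bounded_op T" and U: "bounded_op U"
  obtain K1 where K1: "K1 \<ge> 0" "\<forall>x. norm (T x) \<le> K1 * norm x" using bop_bound[OF T] by blast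
  obtain K2 where K2: "\<forall>x. norm (U x) \<le> K2 * norm x" using U by (auto simp: bounded_op_def)
  have "norm (T (U x)) \<le> (K1 * K2) * norm x" for x
  proof -
    have "norm (T (U x)) \<le> K1 * norm (U x)" using K1 by blast
    also have "\<dots> \<le> K1 * (K2 * norm x)" using K1(1) K2 by (simp add: mult_left_mono)
    finally show ?thesis by (simp add: mult.assoc)
  qed
  then show ?thesis using T U by (intro bopI[of _ "K1 * K2"]) (simp_all add: bop_add bop_cscale)
qed

lemma bop_id: "bounded_op (\<lambda>x. x)"
  by (rule bopI[of _ 1]) auto

lemma bop_id': "bounded_op id"
  using bop_id by (simp add: id_def)

lemma bop_plus: "bounded_op T \<Longrightarrow> bounded_op U \<Longrightarrow> bounded_op (\<lambda>x. T x + U x)"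
proof -
  assume T: "bounded_op T" and U: "bounded_op U"
  obtain K1 where K1: "\<forall>x. norm (T x) \<le> K1 * norm x" using T by (auto simp: bounded_op_def)
  obtain K2 where K2: "\<forall>x. norm (U x) \<le> K2 * norm x" using U by (auto simp: bounded_op_def)
  have "norm (T x + U x) \<le> (K1 + K2) * norm x" for x
    using norm_triangle_ineq[of "T x" "U x"] K1 K2 by (simp add: distrib_right) (smt (verit))
  then show ?thesis using T U
    by (intro bopI[of _ "K1 + K2"]) (simp_all add: bop_add bop_cscale cscale_add_right)
qed

lemma bop_scale: "bounded_op T \<Longrightarrow> bounded_op (\<lambda>x. cscale c (T x))"
proof -
  assume T: "bounded_op T"
  obtain K1 where K1: "\<forall>x. norm (T x) \<le> K1 * norm x" using T by (auto simp: bounded_op_def)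
  have "norm (cscale c (T x)) \<le> (cmod c * K1) * norm x" for x
    using K1 by (simp add: norm_cscale mult.assoc mult_left_mono)
  then show ?thesis using T
    by (intro bopI[of _ "cmod c * K1"]) (simp_all add: bop_add bop_cscale cscale_add_right cscale_cscale mult.commute)
qed

section \<open>Orthogonal projections\<close>

definition proj :: "'a::chilbert set \<Rightarrow> 'a \<Rightarrow> 'a" where
  "proj K x = (THE p. p \<in> K \<and> (\<forall>v\<in>K. cinner (x - p) v = 0))"

lemma proj_unique:
  assumes "csub K" "p \<in> K" "q \<in> K" "\<forall>v\<in>K. cinner (x - p) v = 0" "\<forall>v\<in>K. cinner (x - q) v = 0"
  shows "p = q"
proof -
  have pq: "p - q \<in> K" using assms by (intro csub_diff)
  have "cinner ((x - q) - (x - p)) (p - q) = 0"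
    using assms pq by (simp add: cinner_diff_left)
  then have "cinner (p - q) (p - q) = 0" by simp
  then show ?thesis by simp
qed

lemma proj_prop:
  assumes "csub K" "closed K"
  shows "proj K x \<in> K" "\<forall>v\<in>K. cinner (x - proj K x) v = 0"
proof -
  obtain p where p: "p \<in> K" "\<forall>v\<in>K. cinner (x - p) v = 0" using proj_exists[OF assms] by blast
  have "proj K x = p" unfolding proj_def
    by (rule the_equality) (use p proj_unique[OF assms(1)] in blast)+
  then show "proj K x \<in> K" "\<forall>v\<in>K. cinner (x - proj K x) v = 0" using p by auto
qed

lemma proj_eqI:
  assumes "csub K" "closed K" "p \<in> K" "\<forall>v\<in>K. cinner (x - p) v = 0"
  shows "proj K x = p"
  using proj_unique[OF assms(1) proj_prop(1)[OF assms(1,2)] assms(3) proj_prop(2)[OF assms(1,2)] assms(4)] .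

lemma proj_id: "csub K \<Longrightarrow> closed K \<Longrightarrow> v \<in> K \<Longrightarrow> proj K v = v"
  by (rule proj_eqI) auto

lemma proj_sym:
  assumes "csub K" "closed K"
  shows "cinner (proj K x) y = cinner x (proj K y)"
proof -
  have a: "cinner (x - proj K x) (proj K y) = 0" using proj_prop[OF assms] by blast
  have b: "cinner (y - proj K y) (proj K x) = 0" using proj_prop[OF assms] by blast
  have b': "cinner (proj K x) (y - proj K y) = 0" using b by (metis cinner_commute complex_cnj_zero)
  from a b' show ?thesis by (simp add: cinner_diff_left cinner_diff_right)
qed

lemma proj_bop:
  assumes K: "csub K" "closed K"
  shows "bounded_op (proj K)"
proof -
  have add: "proj K (x + y) = proj K x + proj K y" for x y
  proof (rule proj_eqI[OF K])
    show "proj K x + proj K y \<in> K" using K by (intro csub_add proj_prop)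
    show "\<forall>v\<in>K. cinner (x + y - (proj K x + proj K y)) v = 0"
    proof
      fix v assume "v \<in> K"
      then have h: "cinner (x - proj K x) v = 0" "cinner (y - proj K y) v = 0" using proj_prop[OF K] by auto
      have eq: "x + y - (proj K x + proj K y) = (x - proj K x) + (y - proj K y)" by simp
      show "cinner (x + y - (proj K x + proj K y)) v = 0" unfolding eq cinner_add_left h by simp
    qed
  qed
  have sc: "proj K (cscale c x) = cscale c (proj K x)" for c x
  proof (rule proj_eqI[OF K])
    show "cscale c (proj K x) \<in> K" using K by (intro csub_scale proj_prop)
    show "\<forall>v\<in>K. cinner (cscale c x - cscale c (proj K x)) v = 0"
    proof
      fix v assume "v \<in> K"
      then have h: "cinner (x - proj K x) v = 0" using proj_prop[OF K] by auto
      have eq: "cscale c x - cscale c (proj K x) = cscale c (x - proj K x)"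
        by (simp add: cs.scale_right_diff_distrib)
      show "cinner (cscale c x - cscale c (proj K x)) v = 0" unfolding eq cinner_cscale_left h by simp
    qed
  qed
  have nb: "norm (proj K x) \<le> 1 * norm x" for x
  proof -
    have "(norm (proj K x))^2 = Re (cinner (proj K x) (proj K x))" by (rule norm_sq_cinner)
    also have "cinner (proj K x) (proj K x) = cinner x (proj K (proj K x))" by (rule proj_sym[OF K])
    also have "proj K (proj K x) = proj K x" using K by (intro proj_id proj_prop)
    also have "Re (cinner x (proj K x)) \<le> norm x * norm (proj K x)" by (rule Re_cinner_le)
    finally have "norm (proj K x) * norm (proj K x) \<le> norm x * norm (proj K x)"
      by (simp add: power2_eq_square)
    then show ?thesis
      by (cases "norm (proj K x) = 0") (auto simp: mult_le_cancel_right)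
  qed
  show ?thesis unfolding bounded_op_def using add sc nb by blast
qed

lemma proj_idem: "csub K \<Longrightarrow> closed K \<Longrightarrow> proj K \<circ> proj K = proj K"
  by (rule ext) (simp add: proj_id proj_prop)

section \<open>Adjoints\<close>

lemma cinner_ext: "(\<And>x. cinner x u = cinner x v) \<Longrightarrow> u = v"
proof -
  assume h: "\<And>x. cinner x u = cinner x v"
  have "cinner (u - v) (u - v) = 0" by (simp add: cinner_diff_right h)
  then show "u = v" by simp
qed

lemma adj_unique:
  assumes "\<forall>x y. cinner (T x) y = cinner x (S y)"
  shows "adj T = S"
  unfolding adj_def
proof (rule the_equality)
  show "\<forall>x y. cinner (T x) y = cinner x (S y)" by fact
  fix S' assume S': "\<forall>x y. cinner (T x) y = cinner x (S' y)"
  show "S' = S"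
  proof
    fix y show "S' y = S y" by (rule cinner_ext) (metis S' assms)
  qed
qed

lemma proj_is_projection: "csub K \<Longrightarrow> closed K \<Longrightarrow> is_projection (proj K)"
  unfolding is_projection_def
  by (simp add: proj_bop proj_idem adj_unique proj_sym)

lemma riesz:
  fixes f :: "'a::chilbert \<Rightarrow> complex"
  assumes add: "\<And>x y. f (x + y) = f x + f y" and sc: "\<And>c x. f (cscale c x) = c * f x"
    and bd: "\<And>x. cmod (f x) \<le> K * norm x"
  shows "\<exists>w. \<forall>x. f x = cinner w x"
proof -
  have bl: "bounded_linear f"
  proof (rule bounded_linear_intro[of _ K])
    show "f (x + y) = f x + f y" for x y by (rule add)
    show "f (r *\<^sub>R x) = r *\<^sub>R f x" for r x by (simp add: scaleR_cscale sc scaleR_conv_of_real)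
    show "norm (f x) \<le> norm x * K" for x using bd[of x] by (simp add: mult.commute)
  qed
  have f0: "f 0 = 0" using add[of 0 0] by simp
  define N where "N = {x. f x = 0}"
  have Nc: "closed N" unfolding N_def
    by (rule closed_Collect_eq) (auto intro: linear_continuous_on bl)
  have Ns: "csub N" unfolding N_def csub_def using f0 add sc by auto
  show ?thesis
  proof (cases "\<forall>x. f x = 0")
    case True then show ?thesis by (intro exI[of _ 0]) simp
  next
    case False
    then obtain x0 where x0: "f x0 \<noteq> 0" by blast
    define z where "z = x0 - proj N x0"
    have fz: "f z = f x0"
    proof -
      have "f (proj N x0) = 0" using proj_prop(1)[OF Ns Nc] by (simp add: N_def)
      moreover have "f x0 = f z + f (proj N x0)" using add[of z "proj N x0"] by (simp add: z_def)
      ultimately show ?thesis by simp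
    qed
    have zperp: "\<forall>v\<in>N. cinner z v = 0" using proj_prop(2)[OF Ns Nc] by (simp add: z_def)
    have zz: "cinner z z \<noteq> 0" using fz x0 f0 by auto
    define w where "w = cscale (cnj (f z / cinner z z)) z"
    have "f x = cinner w x" for x
    proof -
      define u where "u = x - cscale (f x / f z) z"
      have "f u = 0"
      proof -
        have "x = u + cscale (f x / f z) z" by (simp add: u_def)
        then have "f x = f u + (f x / f z) * f z" using add sc by metis
        then show ?thesis using fz x0 by simp
      qed
      then have "cinner z u = 0" using zperp by (simp add: N_def)
      then have "cinner z x = (f x / f z) * cinner z z"
        by (simp add: u_def cinner_diff_right cinner_cscale_right)
      then show ?thesis using zz fz x0 by (simp add: w_def cinner_cscale_left field_simps)
    qed
    then show ?thesis by blast
  qed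
qed

lemma adj_exists:
  assumes T: "bounded_op T"
  shows "\<exists>S. \<forall>x y. cinner (T x) y = cinner x (S y)"
proof -
  obtain K where K: "K \<ge> 0" "\<forall>x. norm (T x) \<le> K * norm x" using bop_bound[OF T] by blast
  have "\<forall>y. \<exists>w. \<forall>x. cinner (T x) y = cinner x w"
  proof
    fix y
    have "\<exists>w. \<forall>x. cinner y (T x) = cinner w x"
    proof (rule riesz[of _ "norm y * K"])
      show "cinner y (T (x1 + x2)) = cinner y (T x1) + cinner y (T x2)" for x1 x2
        by (simp add: bop_add[OF T] cinner_add_right)
      show "cinner y (T (cscale c x)) = c * cinner y (T x)" for c x
        by (simp add: bop_cscale[OF T] cinner_cscale_right)
      show "cmod (cinner y (T x)) \<le> norm y * K * norm x" for x
      proof -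
        have "cmod (cinner y (T x)) \<le> norm y * norm (T x)" by (rule cinner_CS)
        also have "\<dots> \<le> norm y * (K * norm x)" using K by (simp add: mult_left_mono)
        finally show ?thesis by (simp add: mult.assoc)
      qed
    qed
    then obtain w where w: "\<forall>x. cinner y (T x) = cinner w x" by blast
    have "cinner (T x) y = cinner x w" for x
      using w by (metis cinner_commute)
    then show "\<exists>w. \<forall>x. cinner (T x) y = cinner x w" by blast
  qed
  then show ?thesis by metis
qed

lemma adj_char: "bounded_op T \<Longrightarrow> cinner (T x) y = cinner x (adj T y)"
  using adj_exists adj_unique by metis

lemma adj_char': "bounded_op T \<Longrightarrow> cinner (adj T x) y = cinner x (T y)"
  by (metis adj_char cinner_commute)

lemma adj_bop:
  assumes T: "bounded_op T"
  shows "bounded_op (adj T)"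
proof -
  obtain K where K: "K \<ge> 0" "\<forall>x. norm (T x) \<le> K * norm x" using bop_bound[OF T] by blast
  have add: "adj T (y + z) = adj T y + adj T z" for y z
    by (rule cinner_ext) (simp add: adj_char[OF T, symmetric] cinner_add_right)
  have sc: "adj T (cscale c y) = cscale c (adj T y)" for c y
    by (rule cinner_ext) (simp add: adj_char[OF T, symmetric] cinner_cscale_right)
  have nb: "norm (adj T y) \<le> K * norm y" for y
  proof -
    have "(norm (adj T y))^2 = Re (cinner (adj T y) (adj T y))" by (rule norm_sq_cinner)
    also have "cinner (adj T y) (adj T y) = cinner (T (adj T y)) y" by (simp add: adj_char[OF T])
    also have "Re (cinner (T (adj T y)) y) \<le> norm (T (adj T y)) * norm y" by (rule Re_cinner_le)
    also have "\<dots> \<le> (K * norm (adj T y)) * norm y" using K by (simp add: mult_right_mono)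
    finally have "norm (adj T y) * norm (adj T y) \<le> norm (adj T y) * (K * norm y)"
      by (simp add: power2_eq_square mult_ac)
    then show ?thesis using K
      by (cases "norm (adj T y) = 0") (auto simp: mult_le_cancel_left)
  qed
  show ?thesis unfolding bounded_op_def using add sc nb by blast
qed

lemma adj_adj: "bounded_op T \<Longrightarrow> adj (adj T) = T"
  by (rule adj_unique) (simp add: adj_char')

lemma adj_comp: "bounded_op T \<Longrightarrow> bounded_op U \<Longrightarrow> adj (T \<circ> U) = adj U \<circ> adj T"
  by (rule adj_unique) (simp add: adj_char)

lemma sa_sym: "bounded_op T \<Longrightarrow> adj T = T \<Longrightarrow> cinner (T x) y = cinner x (T y)"
  by (metis adj_char)



section \<open>Commutants and von Neumann algebras\<close>

lemma commutant_bop: "T \<in> commutant S \<Longrightarrow> bounded_op T" by (simp add: commutant_def)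
lemma commutant_comm: "T \<in> commutant S \<Longrightarrow> R \<in> S \<Longrightarrow> T \<circ> R = R \<circ> T" by (simp add: commutant_def)
lemma commutantI: "bounded_op T \<Longrightarrow> (\<And>R. R \<in> S \<Longrightarrow> T \<circ> R = R \<circ> T) \<Longrightarrow> T \<in> commutant S"
  by (simp add: commutant_def)

lemma commutant_anti: "S \<subseteq> S' \<Longrightarrow> commutant S' \<subseteq> commutant S"
  by (auto simp: commutant_def)

lemma cc_sub: "(\<And>R. R \<in> S \<Longrightarrow> bounded_op R) \<Longrightarrow> S \<subseteq> commutant (commutant S)"
  by (auto simp: commutant_def)

lemma ccc: "(\<And>R. R \<in> S \<Longrightarrow> bounded_op R) \<Longrightarrow> commutant (commutant (commutant S)) = commutant S"
proof
  assume "\<And>R. R \<in> S \<Longrightarrow> bounded_op R"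
  then show "commutant (commutant (commutant S)) \<subseteq> commutant S"
    by (intro commutant_anti cc_sub)
  show "commutant S \<subseteq> commutant (commutant (commutant S))"
    by (intro cc_sub commutant_bop)
qed

lemma commutant_adj:
  assumes S: "\<And>R. R \<in> S \<Longrightarrow> bounded_op R \<and> adj R \<in> S" and T: "T \<in> commutant S"
  shows "adj T \<in> commutant S"
proof (rule commutantI)
  have Tb: "bounded_op T" using T by (rule commutant_bop)
  show "bounded_op (adj T)" using Tb by (rule adj_bop)
  fix Q assume Q: "Q \<in> S"
  have Qb: "bounded_op Q" and Qa: "adj Q \<in> S" using S[OF Q] by auto
  have Qab: "bounded_op (adj Q)" using Qb by (rule adj_bop)
  have "adj T \<circ> Q = adj T \<circ> adj (adj Q)" using Qb by (simp add: adj_adj)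
  also have "\<dots> = adj (adj Q \<circ> T)" using Qab Tb by (simp add: adj_comp)
  also have "adj Q \<circ> T = T \<circ> adj Q" using commutant_comm[OF T Qa] by simp
  also have "adj (T \<circ> adj Q) = adj (adj Q) \<circ> adj T" using Qab Tb by (simp add: adj_comp)
  also have "\<dots> = Q \<circ> adj T" using Qb by (simp add: adj_adj)
  finally show "adj T \<circ> Q = Q \<circ> adj T" .
qed

lemma vN_cc:
  assumes S: "\<And>R. R \<in> S \<Longrightarrow> bounded_op R \<and> adj R \<in> S"
  shows "von_neumann_algebra (commutant (commutant S))"
  unfolding von_neumann_algebra_def
proof (intro conjI ballI)
  show "bounded_op T" if "T \<in> commutant (commutant S)" for T using that by (rule commutant_bop)
  have S': "\<And>R. R \<in> commutant S \<Longrightarrow> bounded_op R \<and> adj R \<in> commutant S"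
    using commutant_adj[OF S] commutant_bop by blast
  show "adj T \<in> commutant (commutant S)" if "T \<in> commutant (commutant S)" for T
    using commutant_adj[OF S' that] .
  show "commutant (commutant (commutant (commutant S))) = commutant (commutant S)"
    by (rule ccc) (rule commutant_bop)
qed

lemma vN_bop: "von_neumann_algebra M \<Longrightarrow> T \<in> M \<Longrightarrow> bounded_op T"
  by (simp add: von_neumann_algebra_def)
lemma vN_adj: "von_neumann_algebra M \<Longrightarrow> T \<in> M \<Longrightarrow> adj T \<in> M"
  by (simp add: von_neumann_algebra_def)
lemma vN_mem:
  assumes "von_neumann_algebra M" "bounded_op X" "\<And>Q. Q \<in> commutant M \<Longrightarrow> Q \<circ> X = X \<circ> Q"
  shows "X \<in> M"
proof -
  have "X \<in> commutant (commutant M)" by (rule commutantI[OF assms(2)]) (simp add: assms(3))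
  then show ?thesis using assms(1) by (simp add: von_neumann_algebra_def)
qed
lemma vN_comm: "von_neumann_algebra M \<Longrightarrow> Q \<in> commutant M \<Longrightarrow> T \<in> M \<Longrightarrow> Q \<circ> T = T \<circ> Q"
  by (simp add: commutant_def)
lemma vN_comp: "von_neumann_algebra M \<Longrightarrow> T \<in> M \<Longrightarrow> U \<in> M \<Longrightarrow> T \<circ> U \<in> M"
proof (rule vN_mem)
  assume M: "von_neumann_algebra M" and T: "T \<in> M" and U: "U \<in> M"
  show "bounded_op (T \<circ> U)" using M T U by (intro bop_comp vN_bop)
  fix Q assume Q: "Q \<in> commutant M"
  have "Q \<circ> (T \<circ> U) = (Q \<circ> T) \<circ> U" by (simp add: comp_assoc)
  also have "\<dots> = T \<circ> (Q \<circ> U)" using vN_comm[OF M Q T] by (simp add: comp_assoc)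
  also have "\<dots> = T \<circ> U \<circ> Q" using vN_comm[OF M Q U] by (simp add: comp_assoc)
  finally show "Q \<circ> (T \<circ> U) = T \<circ> U \<circ> Q" .
qed
lemma vN_id: "von_neumann_algebra M \<Longrightarrow> (\<lambda>x. x) \<in> M"
  by (rule vN_mem) (auto simp: bop_id)
lemma vN_commutant_adj: "von_neumann_algebra M \<Longrightarrow> Q \<in> commutant M \<Longrightarrow> adj Q \<in> commutant M"
  by (rule commutant_adj) (auto simp: vN_bop vN_adj)

lemma Wstar_sub: "von_neumann_algebra N \<Longrightarrow> T \<in> N \<Longrightarrow> Wstar T \<subseteq> N"
  unfolding Wstar_def by blast
lemma Wstar_mem: "T \<in> Wstar T" unfolding Wstar_def by blast
lemma Wstar_adj_mem: "adj T \<in> Wstar T" unfolding Wstar_def von_neumann_algebra_def by blast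

lemma commutant_Wstar:
  assumes T: "bounded_op T" and Q: "bounded_op Q" "Q \<circ> T = T \<circ> Q" "Q \<circ> adj T = adj T \<circ> Q"
  shows "Q \<in> commutant (Wstar T)"
proof -
  define S where "S = {T, adj T}"
  have S: "\<And>R. R \<in> S \<Longrightarrow> bounded_op R \<and> adj R \<in> S"
    using T by (auto simp: S_def adj_bop adj_adj)
  have vN: "von_neumann_algebra (commutant (commutant S))" by (rule vN_cc[OF S])
  have "T \<in> commutant (commutant S)" using cc_sub[of S] S by (auto simp: S_def)
  then have W: "Wstar T \<subseteq> commutant (commutant S)" by (rule Wstar_sub[OF vN])
  have "Q \<in> commutant S" using Q by (auto simp: S_def commutant_def)
  then have "Q \<in> commutant (commutant (commutant S))" using ccc[of S] S by auto
  then show ?thesis using commutant_anti[OF W] by blast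
qed

section \<open>Generated closed subspaces\<close>

definition gen_sp :: "'a::chilbert set \<Rightarrow> 'a set" where
  "gen_sp G = \<Inter> {V. csub V \<and> closed V \<and> G \<subseteq> V}"

lemma gen_sp_csub: "csub (gen_sp G)"
  unfolding gen_sp_def csub_def by blast
lemma gen_sp_closed: "closed (gen_sp G)"
  unfolding gen_sp_def by (rule closed_Inter) blast
lemma gen_sp_sup: "G \<subseteq> gen_sp G"
  unfolding gen_sp_def by blast
lemma gen_sp_least: "csub V \<Longrightarrow> closed V \<Longrightarrow> G \<subseteq> V \<Longrightarrow> gen_sp G \<subseteq> V"
  unfolding gen_sp_def by blast

lemma gen_sp_inv:
  assumes U: "bounded_op U" and G: "\<And>g. g \<in> G \<Longrightarrow> U g \<in> gen_sp G" and v: "v \<in> gen_sp G"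
  shows "U v \<in> gen_sp G"
proof -
  have "gen_sp G \<subseteq> U -` gen_sp G"
  proof (rule gen_sp_least)
    show "csub (U -` gen_sp G)" unfolding csub_def
      using gen_sp_csub[of G] by (auto simp: bop_zero[OF U] bop_add[OF U] bop_cscale[OF U]
          csub_0 csub_add csub_scale)
    show "closed (U -` gen_sp G)" by (rule closed_vimage[OF gen_sp_closed bop_cont[OF U]])
    show "G \<subseteq> U -` gen_sp G" using G by auto
  qed
  then show ?thesis using v by auto
qed

lemma gen_sp_eq_ops:
  assumes U: "bounded_op U" and V: "bounded_op V" and G: "\<And>g. g \<in> G \<Longrightarrow> U g = V g"
    and v: "v \<in> gen_sp G"
  shows "U v = V v"
proof -
  have "gen_sp G \<subseteq> {x. U x = V x}"
  proof (rule gen_sp_least)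
    show "csub {x. U x = V x}" unfolding csub_def
      by (auto simp: bop_zero[OF U] bop_add[OF U] bop_cscale[OF U]
          bop_zero[OF V] bop_add[OF V] bop_cscale[OF V])
    show "closed {x. U x = V x}" by (rule closed_Collect_eq[OF bop_cont[OF U] bop_cont[OF V]])
    show "G \<subseteq> {x. U x = V x}" using G by auto
  qed
  then show ?thesis using v by auto
qed

lemma proj_commute:
  assumes K: "csub K" "closed K" and U: "bounded_op U"
    and inv: "\<And>v. v \<in> K \<Longrightarrow> U v \<in> K" and inv': "\<And>v. v \<in> K \<Longrightarrow> adj U v \<in> K"
  shows "proj K \<circ> U = U \<circ> proj K"
proof
  fix x
  show "(proj K \<circ> U) x = (U \<circ> proj K) x"
    unfolding comp_def
  proof (rule proj_eqI[OF K])
    show "U (proj K x) \<in> K" using inv proj_prop(1)[OF K] by blast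
    show "\<forall>v\<in>K. cinner (U x - U (proj K x)) v = 0"
    proof
      fix v assume v: "v \<in> K"
      have "cinner (U x - U (proj K x)) v = cinner (U (x - proj K x)) v" by (simp add: bop_diff[OF U])
      also have "\<dots> = cinner (x - proj K x) (adj U v)" by (rule adj_char[OF U])
      also have "\<dots> = 0" using proj_prop(2)[OF K] inv'[OF v] by blast
      finally show "cinner (U x - U (proj K x)) v = 0" .
    qed
  qed
qed

section \<open>Central support\<close>

lemma central_support_char:
  assumes M: "von_neumann_algebra M" and R: "R \<in> M"
  defines "K \<equiv> gen_sp {S (R y) | S y. S \<in> M}"
  shows "central_support M R = proj K"
    and "central_projection M (central_support M R)"
    and "central_support M R \<circ> R = R"
proof -
  define G where "G = {S (R y) | S y. S \<in> M}"
  have KG: "K = gen_sp G" by (simp add: K_def G_def)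
  have Ks: "csub K" and Kc: "closed K" by (simp_all add: KG gen_sp_csub gen_sp_closed)
  define P where "P = proj K"
  have Pproj: "is_projection P" unfolding P_def by (rule proj_is_projection[OF Ks Kc])
  have Pb: "bounded_op P" using Pproj by (simp add: is_projection_def)
  have Rb: "bounded_op R" using M R by (rule vN_bop)
  have invM: "U v \<in> K" if U: "U \<in> M" and v: "v \<in> K" for U v
    unfolding KG
  proof (rule gen_sp_inv[OF vN_bop[OF M U] _ v[unfolded KG]])
    fix g assume "g \<in> G"
    then obtain S y where g: "g = S (R y)" "S \<in> M" by (auto simp: G_def)
    have "U g = (U \<circ> S) (R y)" by (simp add: g)
    moreover have "U \<circ> S \<in> M" using vN_comp[OF M U g(2)] .
    ultimately have "U g \<in> G" unfolding G_def by (metis (mono_tags, lifting) mem_Collect_eq)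
    then show "U g \<in> gen_sp G" using gen_sp_sup by blast
  qed
  have invM': "U v \<in> K" if U: "U \<in> commutant M" and v: "v \<in> K" for U v
    unfolding KG
  proof (rule gen_sp_inv[OF commutant_bop[OF U] _ v[unfolded KG]])
    fix g assume "g \<in> G"
    then obtain S y where g: "g = S (R y)" "S \<in> M" by (auto simp: G_def)
    have "U g = S (R (U y))"
      using fun_cong[OF vN_comm[OF M U g(2)]] fun_cong[OF vN_comm[OF M U R]] by (simp add: g)
    then have "U g \<in> G" using g(2) by (auto simp: G_def)
    then show "U g \<in> gen_sp G" using gen_sp_sup by blast
  qed
  have PM: "P \<in> M"
  proof (rule vN_mem[OF M Pb])
    fix Q assume Q: "Q \<in> commutant M"
    have "P \<circ> Q = Q \<circ> P" unfolding P_def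
      by (rule proj_commute[OF Ks Kc commutant_bop[OF Q]])
         (auto intro: invM' Q vN_commutant_adj[OF M Q])
    then show "Q \<circ> P = P \<circ> Q" by simp
  qed
  have Pcomm: "P \<circ> S = S \<circ> P" if S: "S \<in> M" for S
    unfolding P_def
    by (rule proj_commute[OF Ks Kc vN_bop[OF M S]]) (auto intro: invM S vN_adj[OF M S])
  have Pcent: "central_projection M P"
    unfolding central_projection_def center_def using Pproj PM Pcomm by auto
  have RyK: "R y \<in> K" for y
  proof -
    have "(\<lambda>x. x) (R y) \<in> G" using vN_id[OF M] by (auto simp: G_def)
    then show ?thesis unfolding KG using gen_sp_sup by auto
  qed
  have PR: "P \<circ> R = R" unfolding P_def by (rule ext) (simp add: proj_id[OF Ks Kc RyK])
  have Pmin: "P \<circ> Z = P" if Z: "central_projection M Z" "Z \<circ> R = R" for Z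
  proof -
    have Zc: "Z \<in> center M" and Zb: "bounded_op Z"
      using Z(1) by (auto simp: central_projection_def is_projection_def)
    have ZM: "Z \<in> M" and Zcomm: "\<And>S. S \<in> M \<Longrightarrow> Z \<circ> S = S \<circ> Z" using Zc by (auto simp: center_def)
    have fix_: "Z v = v" if v: "v \<in> K" for v
    proof (rule gen_sp_eq_ops[OF Zb bop_id, of G])
      show "v \<in> gen_sp G" using v KG by simp
      fix g assume "g \<in> G"
      then obtain S y where g: "g = S (R y)" "S \<in> M" by (auto simp: G_def)
      have "Z g = S (Z (R y))" using fun_cong[OF Zcomm[OF g(2)]] by (simp add: g)
      also have "Z (R y) = R y" using fun_cong[OF Z(2)] by simp
      finally show "Z g = g" by (simp add: g)
    qed
    have "Z \<circ> P = P" unfolding P_def by (rule ext) (simp add: fix_ proj_prop(1)[OF Ks Kc])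
    moreover have "Z \<circ> P = P \<circ> Z" using Zcomm[OF PM] .
    ultimately show ?thesis by simp
  qed
  have "central_support M R = P"
    unfolding central_support_def
  proof (rule the_equality)
    show "central_projection M P \<and> P \<circ> R = R \<and>
      (\<forall>Z'. central_projection M Z' \<and> Z' \<circ> R = R \<longrightarrow> P \<circ> Z' = P)"
      using Pcent PR Pmin by blast
    fix Z assume Z: "central_projection M Z \<and> Z \<circ> R = R \<and>
      (\<forall>Z'. central_projection M Z' \<and> Z' \<circ> R = R \<longrightarrow> Z \<circ> Z' = Z)"
    have "Z \<circ> P = Z" using Z Pcent PR by blast
    moreover have "P \<circ> Z = P" using Pmin Z by blast
    moreover have "Z \<circ> P = P \<circ> Z" using Z PM by (auto simp: central_projection_def center_def)
    ultimately show "Z = P" by simp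
  qed
  then show "central_support M R = proj K" "central_projection M (central_support M R)"
    "central_support M R \<circ> R = R" using Pcent PR by (auto simp: P_def)
qed



lemma bop_sub: "bounded_op T \<Longrightarrow> bounded_op U \<Longrightarrow> bounded_op (\<lambda>x. T x - U x)"
proof -
  assume T: "bounded_op T" and U: "bounded_op U"
  have "bounded_op (\<lambda>x. T x + cscale (-1) (U x))" by (intro bop_plus bop_scale T U)
  then show ?thesis by (simp add: cscale_minus_one)
qed

lemma sum_zero_from_blocks:
  fixes D :: "'h::chilbert \<Rightarrow> 'h"
  assumes Db: "bounded_op D" and E_sum: "\<And>x. ((\<lambda>j. E j x) has_sum x) \<Lambda>"
    and Eb: "\<And>j. j \<in> \<Lambda> \<Longrightarrow> bounded_op (E j)"
    and blk: "\<And>j k x. j \<in> \<Lambda> \<Longrightarrow> k \<in> \<Lambda> \<Longrightarrow> E j (D (E k x)) = 0"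
  shows "D x = 0"
proof -
  have col: "D (E k x) = 0" if k: "k \<in> \<Lambda>" for k
  proof -
    have "((\<lambda>j. E j (D (E k x))) has_sum D (E k x)) \<Lambda>" by (rule E_sum)
    moreover have "((\<lambda>j. E j (D (E k x))) has_sum 0) \<Lambda>" by (rule has_sum_0) (simp add: blk k)
    ultimately show ?thesis by (rule has_sum_unique)
  qed
  have "((\<lambda>k. D (E k x)) has_sum D x) \<Lambda>" by (rule has_sum_bounded_linear[OF bop_bl[OF Db] E_sum])
  moreover have "((\<lambda>k. D (E k x)) has_sum 0) \<Lambda>" by (rule has_sum_0) (simp add: col)
  ultimately show ?thesis by (rule has_sum_unique)
qed

theorem mainTheorem7:
  fixes M :: "('h::chilbert \<Rightarrow> 'h) set"
    and A B :: "'h \<Rightarrow> 'h"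
    and E :: "'i \<Rightarrow> ('h \<Rightarrow> 'h)"
    and \<Lambda> :: "'i set"
  assumes vN: "von_neumann_algebra M"
    and A_in: "A \<in> M" and B_in: "B \<in> M"
    and A_sa: "self_adjoint A" and B_sa: "self_adjoint B"
    and E_proj: "\<And>j. j \<in> \<Lambda> \<Longrightarrow> is_projection (E j) \<and> E j \<in> Wstar A"
    and E_sum: "\<And>x. ((\<lambda>j. E j x) has_sum x) \<Lambda>"
    and E_cs: "\<And>j k. j \<in> \<Lambda> \<Longrightarrow> k \<in> \<Lambda> \<Longrightarrow> j \<noteq> k \<Longrightarrow>
        central_support M (E j \<circ> B \<circ> E k) = central_support M (E j) \<circ> central_support M (E k)"
    and E_irr: "\<And>j. j \<in> \<Lambda> \<Longrightarrow>
        irreducible_in (corner (E j) M) (E j \<circ> (\<lambda>x. A x + cscale \<i> (B x)) \<circ> E j)"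
  shows "irreducible_in M (\<lambda>x. A x + cscale \<i> (B x))"
proof -
  define X where "X = (\<lambda>x. A x + cscale \<i> (B x))"
  define X' where "X' = (\<lambda>x. A x + cscale (- \<i>) (B x))"
  have Ab: "bounded_op A" and Aa: "adj A = A" using A_sa by (auto simp: self_adjoint_def)
  have Bb: "bounded_op B" and Ba: "adj B = B" using B_sa by (auto simp: self_adjoint_def)
  have Asym: "\<And>x y. cinner (A x) y = cinner x (A y)" using sa_sym[OF Ab Aa] .
  have Bsym: "\<And>x y. cinner (B x) y = cinner x (B y)" using sa_sym[OF Bb Ba] .
  have Xb: "bounded_op X" unfolding X_def by (intro bop_plus bop_scale Ab Bb)
  have X'b: "bounded_op X'" unfolding X'_def by (intro bop_plus bop_scale Ab Bb)
  have Xsym: "cinner (X x) y = cinner x (X' y)" for x y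
    by (simp add: X_def X'_def cinner_add_left cinner_add_right cinner_cscale_left
        cinner_cscale_right cinner_diff_right cinner_minus_right Asym Bsym)
  have adjX: "adj X = X'" by (rule adj_unique) (simp add: Xsym)
  have XM: "X \<in> M"
  proof (rule vN_mem[OF vN Xb])
    fix Q assume Q: "Q \<in> commutant M"
    have Qb: "bounded_op Q" using Q by (rule commutant_bop)
    have QA: "Q (A x) = A (Q x)" for x using fun_cong[OF vN_comm[OF vN Q A_in]] by simp
    have QB: "Q (B x) = B (Q x)" for x using fun_cong[OF vN_comm[OF vN Q B_in]] by simp
    show "Q \<circ> X = X \<circ> Q" by (rule ext) (simp add: X_def bop_add[OF Qb] bop_cscale[OF Qb] QA QB)
  qed
  have WAM: "Wstar A \<subseteq> M" by (rule Wstar_sub[OF vN A_in])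
  have WXM: "Wstar X \<subseteq> M" by (rule Wstar_sub[OF vN XM])
  have EM: "E j \<in> M" if "j \<in> \<Lambda>" for j using E_proj[OF that] WAM by blast
  have Eb: "bounded_op (E j)" if "j \<in> \<Lambda>" for j using E_proj[OF that] by (simp add: is_projection_def)
  have EE: "E j (E j x) = E j x" if "j \<in> \<Lambda>" for j x
  proof -
    have "E j \<circ> E j = E j" using E_proj[OF that] by (simp add: is_projection_def)
    from fun_cong[OF this, of x] show ?thesis by simp
  qed
  have Esym: "cinner (E j x) y = cinner x (E j y)" if "j \<in> \<Lambda>" for j x y
    using E_proj[OF that] sa_sym[of "E j"] by (simp add: is_projection_def)
  have cent_comm: "Z (W x) = W (Z x)" if "Z \<in> center M" "W \<in> M" for Z W x
  proof -
    have "Z \<circ> W = W \<circ> Z" using that by (simp add: center_def)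
    from fun_cong[OF this, of x] show ?thesis by simp
  qed
  show ?thesis
    unfolding irreducible_in_def X_def[symmetric]
  proof
    show "center M \<subseteq> commutant (Wstar X) \<inter> M"
    proof
      fix Z assume Z: "Z \<in> center M"
      have ZM: "Z \<in> M" using Z by (simp add: center_def)
      have "Z \<in> commutant (Wstar X)"
      proof (rule commutantI)
        show "bounded_op Z" by (rule vN_bop[OF vN ZM])
        fix R assume "R \<in> Wstar X"
        then have "R \<in> M" using WXM by blast
        then show "Z \<circ> R = R \<circ> Z" using Z by (simp add: center_def)
      qed
      then show "Z \<in> commutant (Wstar X) \<inter> M" using ZM by blast
    qed
  next
    show "commutant (Wstar X) \<inter> M \<subseteq> center M"
    proof
      fix T assume T: "T \<in> commutant (Wstar X) \<inter> M"
      have TM: "T \<in> M" and TW: "T \<in> commutant (Wstar X)" using T by auto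
      have Tb: "bounded_op T" by (rule vN_bop[OF vN TM])
      have TX: "T (X x) = X (T x)" for x
        using fun_cong[OF commutant_comm[OF TW Wstar_mem]] by simp
      have TX': "T (X' x) = X' (T x)" for x
        using fun_cong[OF commutant_comm[OF TW Wstar_adj_mem]] by (simp add: adjX)
      have Aeq: "A y = cscale (1/2) (X y + X' y)" for y
      proof -
        have "X y + X' y = A y + A y + (cscale \<i> (B y) + cscale (- \<i>) (B y))"
          by (simp add: X_def X'_def algebra_simps)
        also have "cscale \<i> (B y) + cscale (- \<i>) (B y) = 0"
          by (simp add: cscale_add_left[symmetric])
        finally have "X y + X' y = A y + A y" by simp
        then have "cscale (1/2) (X y + X' y) = cscale (1/2 + 1/2) (A y)"
          by (simp only: cscale_add_left cscale_add_right)
        then show ?thesis by simp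
      qed
      have Beq: "B y = cscale (- \<i> / 2) (X y - X' y)" for y
      proof -
        have "X y - X' y = cscale \<i> (B y) + cscale \<i> (B y)"
          by (simp add: X_def X'_def)
        also have "\<dots> = cscale (2 * \<i>) (B y)" by (simp only: mult_2 cscale_add_left)
        finally have "cscale (- \<i> / 2) (X y - X' y) = cscale ((- \<i> / 2) * (2 * \<i>)) (B y)"
          by (simp add: cscale_cscale)
        also have "(- \<i> / 2) * (2 * \<i>) = 1" by (simp add: field_simps)
        finally show ?thesis by simp
      qed
      have TA: "T (A x) = A (T x)" for x
        by (simp add: Aeq bop_add[OF Tb] bop_cscale[OF Tb] TX TX')
      have TB: "T (B x) = B (T x)" for x
        by (simp add: Beq bop_minus[OF Tb] bop_diff[OF Tb] bop_cscale[OF Tb] TX TX')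
      have TWA: "T \<in> commutant (Wstar A)"
        by (rule commutant_Wstar[OF Ab Tb]) (auto simp: Aa TA)
      have TE: "T (E j x) = E j (T x)" if j: "j \<in> \<Lambda>" for j x
        using fun_cong[OF commutant_comm[OF TWA conjunct2[OF E_proj[OF j]]]] by simp
      have CC: "E j (T (W (E j x))) = E j (W (E j (T x)))" if j: "j \<in> \<Lambda>" and W: "W \<in> M" for j W x
      proof -
        define Y where "Y = E j \<circ> X \<circ> E j"
        define Y' where "Y' = E j \<circ> X' \<circ> E j"
        define Q where "Q = E j \<circ> T \<circ> E j"
        have Yb: "bounded_op Y" unfolding Y_def by (intro bop_comp Eb j Xb)
        have Qb: "bounded_op Q" unfolding Q_def by (intro bop_comp Eb j Tb)
        have adjY: "adj Y = Y'"
          by (rule adj_unique) (simp add: Y_def Y'_def Esym[OF j] Xsym)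
        have QY: "Q \<circ> Y = Y \<circ> Q"
          by (rule ext) (simp add: Q_def Y_def EE[OF j] TE[OF j] TX)
        have QY': "Q \<circ> adj Y = adj Y \<circ> Q"
          by (rule ext) (simp add: adjY Q_def Y'_def EE[OF j] TE[OF j] TX')
        have Qc: "Q \<in> commutant (Wstar Y)" by (rule commutant_Wstar[OF Yb Qb QY QY'])
        have Qcor: "Q \<in> corner (E j) M" unfolding corner_def Q_def using TM by blast
        have "Q \<in> center (corner (E j) M)"
        proof -
          have "commutant (Wstar Y) \<inter> corner (E j) M = center (corner (E j) M)"
            using E_irr[OF j] by (simp add: irreducible_in_def Y_def X_def)
          then show ?thesis using Qc Qcor by blast
        qed
        moreover have "E j \<circ> W \<circ> E j \<in> corner (E j) M" unfolding corner_def using W by blast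
        ultimately have "Q \<circ> (E j \<circ> W \<circ> E j) = (E j \<circ> W \<circ> E j) \<circ> Q" by (simp add: center_def)
        from fun_cong[OF this, of x] show ?thesis by (simp add: Q_def EE[OF j] TE[OF j])
      qed
      have "T \<circ> S = S \<circ> T" if S: "S \<in> M" for S
      proof
        fix x
        define D where "D = (\<lambda>x. T (S x) - S (T x))"
        have Sb: "bounded_op S" by (rule vN_bop[OF vN S])
        have TSb: "bounded_op (T \<circ> S)" and STb: "bounded_op (S \<circ> T)"
          by (simp_all add: bop_comp Tb Sb)
        have Db: "bounded_op D" unfolding D_def
          using bop_sub[OF TSb STb] by (simp add: comp_def)
        have blk: "E j (D (E k y)) = 0" if j: "j \<in> \<Lambda>" and k: "k \<in> \<Lambda>" for j k y
        proof (cases "j = k")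
          case True
          have c: "E j (T (S (E j y))) = E j (S (E j (T y)))" by (rule CC[OF j S])
          have "E j (D (E j y)) = E j (T (S (E j y))) - E j (S (T (E j y)))"
            by (simp add: D_def bop_diff[OF Eb[OF j]])
          also have "E j (S (T (E j y))) = E j (S (E j (T y)))" by (simp add: TE[OF j])
          finally have "E j (D (E j y)) = 0" using c by simp
          then show ?thesis using True by simp
        next
          case False
          define R where "R = E j \<circ> B \<circ> E k"
          have RM: "R \<in> M" unfolding R_def by (intro vN_comp vN EM j k B_in)
          define K where "K = gen_sp {S' (R z) | S' z. S' \<in> M}"
          have Ks: "csub K" and Kc: "closed K" by (simp_all add: K_def gen_sp_csub gen_sp_closed)
          have P: "central_support M R = proj K"
            using central_support_char(1)[OF vN RM] by (simp add: K_def)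
          define Cj where "Cj = central_support M (E j)"
          define Ck where "Ck = central_support M (E k)"
          have PC: "proj K = Cj \<circ> Ck" using E_cs[OF j k False] P by (simp add: R_def Cj_def Ck_def)
          have Cjc: "Cj \<in> center M" and CjE: "Cj \<circ> E j = E j"
            using central_support_char(2,3)[OF vN EM[OF j]] by (auto simp: Cj_def central_projection_def)
          have Ckc: "Ck \<in> center M" and CkE: "Ck \<circ> E k = E k"
            using central_support_char(2,3)[OF vN EM[OF k]] by (auto simp: Ck_def central_projection_def)
          have Cjb: "bounded_op Cj" and Ckb: "bounded_op Ck"
            using Cjc Ckc vN_bop[OF vN] by (auto simp: center_def)
          have EjCj: "E j (Cj z) = E j z" for z
            using cent_comm[OF Cjc EM[OF j]] fun_cong[OF CjE, of z] by simp
          have EkCk: "E k (Ck z) = E k z" for z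
            using cent_comm[OF Ckc EM[OF k]] fun_cong[OF CkE, of z] by simp
          define L1 where "L1 = T \<circ> (E j \<circ> (S \<circ> E k))"
          define L2 where "L2 = E j \<circ> (S \<circ> (E k \<circ> T))"
          have L1b: "bounded_op L1" unfolding L1_def by (intro bop_comp Tb Sb Eb j k)
          have L2b: "bounded_op L2" unfolding L2_def by (intro bop_comp Tb Sb Eb j k)
          have L12: "L1 v = L2 v" if v: "v \<in> K" for v
          proof (rule gen_sp_eq_ops[OF L1b L2b _ v[unfolded K_def]])
            fix g assume "g \<in> {S' (R z) | S' z. S' \<in> M}"
            then obtain S' z where g: "g = S' (R z)" "S' \<in> M" by blast
            have W1: "S \<circ> E k \<circ> S' \<in> M" by (intro vN_comp vN S EM k g(2))
            have W2: "S' \<circ> E j \<circ> B \<in> M" by (intro vN_comp vN g(2) EM j B_in)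
            have "L1 g = E j (T ((S \<circ> E k \<circ> S') (E j (B (E k z)))))"
              by (simp add: L1_def g R_def TE[OF j])
            also have "\<dots> = E j ((S \<circ> E k \<circ> S') (E j (T (B (E k z)))))" by (rule CC[OF j W1])
            also have "\<dots> = E j (S (E k (S' (E j (B (E k (T z)))))))" by (simp add: TB TE[OF k])
            finally have 1: "L1 g = E j (S (E k (S' (E j (B (E k (T z)))))))" .
            have "E k (T ((S' \<circ> E j \<circ> B) (E k z))) = E k ((S' \<circ> E j \<circ> B) (E k (T z)))"
              by (rule CC[OF k W2])
            then have "L2 g = E j (S (E k (S' (E j (B (E k (T z)))))))"
              by (simp add: L2_def g R_def)
            with 1 show "L1 g = L2 g" by simp
          qed
          have Px: "proj K x' \<in> K" for x' by (rule proj_prop(1)[OF Ks Kc])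
          have L1P: "L1 (proj K x') = L1 x'" for x'
            by (simp add: L1_def PC cent_comm[OF Cjc S, symmetric] cent_comm[OF Cjc EM[OF k], symmetric]
                EjCj EkCk)
          have L2P: "L2 (proj K x') = L2 x'" for x'
            by (simp add: L2_def PC cent_comm[OF Cjc TM, symmetric] cent_comm[OF Ckc TM, symmetric]
                cent_comm[OF Cjc S, symmetric] cent_comm[OF Cjc EM[OF k], symmetric] EjCj EkCk)
          have "L1 y = L2 y" using L12[OF Px, of y] L1P L2P by simp
          then show ?thesis
            by (simp add: D_def L1_def L2_def bop_diff[OF Eb[OF j]] TE[OF j] TE[OF k])
        qed
        have "D x = 0"
          by (rule sum_zero_from_blocks[OF Db E_sum Eb blk])
        then show "(T \<circ> S) x = (S \<circ> T) x" by (simp add: D_def)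
      qed
      then show "T \<in> center M" using TM by (simp add: center_def)
    qed
  qed
qed


end
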